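(* Let $n,m\ge1$, let $p_{n,m}$ be stable of degree $n$ in $z$ and $m$ in $w$, and let $L$ and $a_0,\dots,a_{m-1}$ be as defined in the context. In $L^2\!\left(\frac{d\sigma}{|p_{n,m}|^2}\right)$, for each $0\le k\le m-1$ the polynomial $a_k$ is orthogonal to every monomial in $$\mathcal{O}_k=\{z^iw^j: i>n,\ j<0\}\cup\{z^iw^j:0\le j<m,\ j\ne k\}\cup\{z^iw^j: i<n,\ j\ge m\}\cup\{z^iw^k: i\ne n\}$$ (all $i,j\in\mathbb{Z}$), and for every $\eta\in\mathbb{C}$ the polynomial $L(\cdot,\cdot;\eta)$ is orthogonal to every monomial in $$\mathcal{O}=\{z^iw^j: i>n,\ j<0\}\cup\{z^iw^j: i\ne n,\ 0\le j<m\}\cup\{z^iw^j: i<n,\ j\ge m\}.$$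
   Context: $\sigma$ is normalized Lebesgue measure on $\mathbb{T}^2$; a polynomial $p\in\mathbb{C}[z,w]$ is stable if it has no zeros in $\{|z|\le1,|w|\le1\}$. Inner products are $\langle f,g\rangle=\int_{\mathbb{T}^2}f\bar g\,\frac{d\sigma}{|p_{n,m}|^2}$. Set $\tilde p_{n,m}(z,w)=z^nw^m\overline{p_{n,m}(1/\bar z,1/\bar w)}$ and $$L(z,w;\eta)=z^n\,\frac{p_{n,m}(z,w)\overline{p_{n,m}(1/\bar z,\eta)}-\tilde p_{n,m}(z,w)\overline{\tilde p_{n,m}(1/\bar z,\eta)}}{1-w\bar\eta},$$ which is a polynomial in $(z,w,\bar\eta)$ of degree at most $m-1$ in $\bar\eta$; the polynomials $a_j(z,w)$ are defined by $L(z,w;\eta)=\sum_{j=0}^{m-1}a_j(z,w)\bar\eta^j$. *)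

theory Defs
  imports "HOL-Analysis.Analysis"
begin

text \<open>A bivariate complex polynomial is represented by its (finitely supported)
  coefficient function: c i j is the coefficient of z^i w^j.\<close>

definition bpoly_eval :: "(nat \<Rightarrow> nat \<Rightarrow> complex) \<Rightarrow> complex \<Rightarrow> complex \<Rightarrow> complex" where
  "bpoly_eval c z w = (\<Sum>(i,j)\<in>{(i,j). c i j \<noteq> 0}. c i j * z ^ i * w ^ j)"

definition has_bidegree :: "(nat \<Rightarrow> nat \<Rightarrow> complex) \<Rightarrow> nat \<Rightarrow> nat \<Rightarrow> bool" where
  "has_bidegree c n m \<longleftrightarrow>
     (\<forall>i j. c i j \<noteq> 0 \<longrightarrow> i \<le> n \<and> j \<le> m) \<and> (\<exists>j. c n j \<noteq> 0) \<and> (\<exists>i. c i m \<noteq> 0)"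

definition stable :: "(nat \<Rightarrow> nat \<Rightarrow> complex) \<Rightarrow> bool" where
  "stable c \<longleftrightarrow> (\<forall>z w. cmod z \<le> 1 \<longrightarrow> cmod w \<le> 1 \<longrightarrow> bpoly_eval c z w \<noteq> 0)"

text \<open>reflection: coefficients of z^n w^m conj(p(1/conj z, 1/conj w))\<close>
definition reflect :: "nat \<Rightarrow> nat \<Rightarrow> (nat \<Rightarrow> nat \<Rightarrow> complex) \<Rightarrow> (nat \<Rightarrow> nat \<Rightarrow> complex)" where
  "reflect n m c = (\<lambda>i j. if i \<le> n \<and> j \<le> m then cnj (c (n - i) (m - j)) else 0)"

text \<open>inner product of L^2(d sigma / |p|^2) on the torus, sigma normalized Lebesgue measure\<close>
definition torus_inner ::
  "(nat \<Rightarrow> nat \<Rightarrow> complex) \<Rightarrow> (complex \<Rightarrow> complex \<Rightarrow> complex) \<Rightarrow> (complex \<Rightarrow> complex \<Rightarrow> complex) \<Rightarrow> complex" where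
  "torus_inner c f g =
     (LINT x:{0..2*pi}\<times>{0..2*pi}|lborel.
        f (cis (fst x)) (cis (snd x)) * cnj (g (cis (fst x)) (cis (snd x)))
          / complex_of_real ((cmod (bpoly_eval c (cis (fst x)) (cis (snd x)))) ^ 2))
     / complex_of_real (4 * pi ^ 2)"

definition monomial :: "int \<Rightarrow> int \<Rightarrow> complex \<Rightarrow> complex \<Rightarrow> complex" where
  "monomial i j z w = z powi i * w powi j"

end

theory Submission
  imports Defs "HOL-Computational_Algebra.Polynomial"
begin

lemma circle_mean:
  fixes h h' :: "complex \<Rightarrow> complex"
  assumes hd: "\<And>z. cmod z \<le> 1 \<Longrightarrow> (h has_field_derivative h' z) (at z)"
    and hc: "continuous_on (cball 0 1) h'"
  shows "integral {0..2*pi} (\<lambda>s. h (cis s)) = 2 * pi * h 0"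
proof -
  define U where "U = cball (0::complex) 1"
  have hcont: "continuous_on U h"
  proof (rule DERIV_continuous_on)
    fix x assume "x \<in> U"
    then have "cmod x \<le> 1" by (simp add: U_def)
    then show "(h has_field_derivative h' x) (at x within U)"
      by (rule has_field_derivative_at_within[OF hd])
  qed
  have hc': "continuous_on U h'" using hc U_def by simp
  define \<Psi> where "\<Psi> x = integral (cbox 0 (2*pi)) (\<lambda>s. h (x * cis s))" for x
  define \<Psi>' where "\<Psi>' x = integral (cbox 0 (2*pi)) (\<lambda>s. h' (x * cis s) * cis s)" for x
  have inU: "x \<in> U \<Longrightarrow> x * cis s \<in> U" for x s by (simp add: U_def norm_mult)
  have cont1: "continuous_on (cbox 0 (2*pi)) (\<lambda>s. h (x * cis s))" if "x \<in> U" for x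
  proof (rule continuous_on_compose2[OF hcont])
    show "continuous_on (cbox 0 (2 * pi)) (\<lambda>s. x * cis s)" by (intro continuous_intros)
    show "(\<lambda>s. x * cis s) ` cbox 0 (2 * pi) \<subseteq> U" using inU that by blast
  qed
  have cont2: "continuous_on (cbox 0 (2*pi)) (\<lambda>s. h' (x * cis s) * cis s)" if "x \<in> U" for x
  proof (rule continuous_on_mult)
    show "continuous_on (cbox 0 (2 * pi)) (\<lambda>s. h' (x * cis s))"
    proof (rule continuous_on_compose2[OF hc'])
      show "continuous_on (cbox 0 (2 * pi)) (\<lambda>s. x * cis s)" by (intro continuous_intros)
      show "(\<lambda>s. x * cis s) ` cbox 0 (2 * pi) \<subseteq> U" using inU that by blast
    qed
    show "continuous_on (cbox 0 (2 * pi)) cis" by (intro continuous_intros)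
  qed
  have cont3: "continuous_on (U \<times> cbox 0 (2 * pi)) (\<lambda>(x, t). h' (x * cis t) * cis t)"
  proof -
    have a: "continuous_on (U \<times> cbox 0 (2 * pi)) (\<lambda>p. fst p * cis (snd p))"
      by (intro continuous_intros)
    have b: "continuous_on (U \<times> cbox 0 (2 * pi)) (\<lambda>p. h' (fst p * cis (snd p)))"
    proof (rule continuous_on_compose2[OF hc' a])
      show "(\<lambda>p. fst p * cis (snd p)) ` (U \<times> cbox 0 (2 * pi)) \<subseteq> U" using inU by auto
    qed
    have c: "continuous_on (U \<times> cbox 0 (2 * pi)) (\<lambda>p. h' (fst p * cis (snd p)) * cis (snd p))"
      by (rule continuous_on_mult[OF b]) (intro continuous_intros)
    show ?thesis using c by (simp add: case_prod_beta')
  qed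
  have der: "(\<Psi> has_field_derivative \<Psi>' x) (at x within U)" if x: "x \<in> U" for x
    unfolding \<Psi>_def \<Psi>'_def
  proof (rule leibniz_rule_field_derivative)
    fix x t assume "x \<in> U" "t \<in> cbox 0 (2*pi)"
    then have "cmod (x * cis t) \<le> 1" by (simp add: U_def norm_mult)
    then have d1: "(h has_field_derivative h' (x * cis t)) (at (x * cis t))" by (rule hd)
    have d2: "((\<lambda>x. x * cis t) has_field_derivative cis t) (at x)"
      by (auto intro!: derivative_eq_intros)
    have "((\<lambda>x. h (x * cis t)) has_field_derivative h' (x * cis t) * cis t) (at x)"
      by (rule DERIV_chain2[OF d1 d2])
    then show "((\<lambda>x. h (x * cis t)) has_field_derivative h' (x * cis t) * cis t) (at x within U)"
      by (rule has_field_derivative_at_within)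
  next
    fix x assume "x \<in> U"
    show "(\<lambda>s. h (x * cis s)) integrable_on cbox 0 (2 * pi)"
      by (rule integrable_continuous[OF cont1[OF \<open>x \<in> U\<close>]])
  next
    show "continuous_on (U \<times> cbox 0 (2 * pi)) (\<lambda>(x, t). h' (x * cis t) * cis t)" by (rule cont3)
    show "x \<in> U" by fact
    show "convex U" by (simp add: U_def)
  qed
  define g where "g t = \<Psi> (of_real t)" for t :: real
  have gder: "(g has_vector_derivative \<Psi>' (of_real t)) (at t within {0..1})" if t: "t \<in> {0..1}" for t
  proof -
    have "((\<lambda>y. \<Psi> (of_real y)) has_derivative (\<lambda>y. (\<lambda>h. \<Psi>' (of_real t) * h) (of_real y))) (at t within {0..1})"
    proof (rule has_derivative_in_compose2[where t=U and g=\<Psi> and g'="\<lambda>x h. \<Psi>' x * h" and f=of_real and f'=of_real])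
      show "\<And>x. x \<in> U \<Longrightarrow> (\<Psi> has_derivative (\<lambda>h. \<Psi>' x * h)) (at x within U)"
        using der by (simp add: has_field_derivative_def)
      show "of_real ` {0..1} \<subseteq> U" by (auto simp: U_def)
      show "t \<in> {0..1}" by fact
      show "(of_real has_derivative of_real) (at t within {0..1})"
        by (rule bounded_linear_imp_has_derivative) (rule bounded_linear_of_real)
    qed
    then show ?thesis unfolding g_def has_vector_derivative_def
      by (simp add: scaleR_conv_of_real mult.commute)
  qed
  have zero: "\<Psi>' (of_real t) = 0" if t: "t \<in> {0<..1}" for t
  proof -
    have tU: "of_real t \<in> U" using t by (simp add: U_def)
    have vd: "((\<lambda>s. h (of_real t * cis s)) has_vector_derivative h' (of_real t * cis s) * (of_real t * (\<i> * cis s))) (at s within {0..2*pi})" for s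
    proof -
      have "cmod (of_real t * cis s) \<le> 1" using t by (simp add: norm_mult)
      then have hd1: "(h has_field_derivative h' (of_real t * cis s)) (at (of_real t * cis s))" by (rule hd)
      have vd1: "((\<lambda>s. of_real t * cis s) has_vector_derivative (of_real t * (\<i> * cis s))) (at s within {0..2*pi})"
        unfolding has_vector_derivative_def
        by (auto intro!: derivative_eq_intros simp: scaleR_conv_of_real algebra_simps)
      have "((h \<circ> (\<lambda>s. of_real t * cis s)) has_vector_derivative (of_real t * (\<i> * cis s)) * h' (of_real t * cis s)) (at s within {0..2*pi})"
        by (rule field_vector_diff_chain_within[OF vd1 has_field_derivative_at_within[OF hd1]])
      then show ?thesis by (simp add: o_def mult.commute)
    qed
    have "((\<lambda>s. h' (of_real t * cis s) * (of_real t * (\<i> * cis s))) has_integral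
          (h (of_real t * cis (2*pi)) - h (of_real t * cis 0))) {0..2*pi}"
      by (rule fundamental_theorem_of_calculus) (auto intro: vd)
    moreover have "cis (2*pi) = 1" by (rule cis_2pi)
    ultimately have "((\<lambda>s. (\<i> * of_real t) * (h' (of_real t * cis s) * cis s)) has_integral 0) {0..2*pi}"
      by (simp add: algebra_simps)
    moreover have "((\<lambda>s. (\<i> * of_real t) * (h' (of_real t * cis s) * cis s)) has_integral (\<i> * of_real t) * \<Psi>' (of_real t)) {0..2*pi}"
    proof -
      have "(\<lambda>s. h' (of_real t * cis s) * cis s) integrable_on cbox 0 (2*pi)"
        by (rule integrable_continuous[OF cont2[OF tU]])
      then show ?thesis unfolding \<Psi>'_def
        by (intro has_integral_mult_right) (auto simp: integrable_integral)
    qed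
    ultimately have "(\<i> * of_real t) * \<Psi>' (of_real t) = 0" by (rule has_integral_unique[rotated])
    then show ?thesis using t by simp
  qed
  have "g 1 = g 0"
  proof (rule has_derivative_zero_unique_strong_interval[where k="{0}" and a=0 and b=1])
    show "continuous_on {0..1} g"
      unfolding continuous_on_eq_continuous_within
      using gder has_vector_derivative_continuous by blast
    show "(g has_derivative (\<lambda>h. 0)) (at x within {0..1})" if "x \<in> {0..1} - {0}" for x
    proof -
      have "\<Psi>' (of_real x) = 0" using that zero by auto
      then show ?thesis using gder[of x] that unfolding has_vector_derivative_def by simp
    qed
  qed auto
  moreover have "g 1 = integral {0..2*pi} (\<lambda>s. h (cis s))" by (simp add: g_def \<Psi>_def)
  moreover have "g 0 = 2 * pi * h 0" by (simp add: g_def \<Psi>_def scaleR_conv_of_real)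
  ultimately show ?thesis by simp
qed

lemma sum_atMost_rev: "(\<Sum>i\<le>(n::nat). g i) = (\<Sum>i\<le>n. g (n - i))"
  by (rule sum.reindex_bij_witness[where i="\<lambda>i. n - i" and j="\<lambda>i. n - i"]) auto

lemma circle_poly_zero:
  fixes b :: "nat \<Rightarrow> complex" and N \<alpha> :: nat
  assumes nz: "\<And>z. cmod z \<le> 1 \<Longrightarrow> (\<Sum>i\<le>N. b i * z^i) \<noteq> 0" and a: "\<alpha> \<ge> 1"
  shows "integral {0..2*pi} (\<lambda>s. cis s ^ \<alpha> / (\<Sum>i\<le>N. b i * cis s ^ i)) = 0"
proof -
  define q where "q z = (\<Sum>i\<le>N. b i * z^i)" for z
  define dq where "dq z = (\<Sum>i\<le>N. b i * (of_nat i * (1 * z^(i - Suc 0))))" for z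
  have qd: "(q has_field_derivative dq z) (at z)" for z
    unfolding q_def dq_def
    by (intro DERIV_sum DERIV_cmult DERIV_power DERIV_ident)
  define h where "h z = z ^ \<alpha> / q z" for z
  define h' where "h' z = (of_nat \<alpha> * (1 * z ^ (\<alpha> - Suc 0)) * q z - z ^ \<alpha> * dq z) / (q z * q z)" for z
  have "integral {0..2*pi} (\<lambda>s. h (cis s)) = 2 * pi * h 0"
  proof (rule circle_mean)
    fix z :: complex assume z: "cmod z \<le> 1"
    then have "q z \<noteq> 0" using nz q_def by auto
    then show "(h has_field_derivative h' z) (at z)"
      unfolding h_def h'_def
      by (intro DERIV_divide DERIV_power DERIV_ident qd)
  next
    have "continuous_on (cball 0 1) q" "continuous_on (cball 0 1) dq"
      unfolding q_def dq_def by (intro continuous_intros)+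
    then show "continuous_on (cball 0 1) h'"
      unfolding h'_def using nz q_def
      by (intro continuous_intros) auto
  qed
  moreover have "h 0 = 0" using a by (simp add: h_def)
  ultimately show ?thesis by (simp add: h_def q_def)
qed

lemma cis_int_integral:
  fixes \<alpha> :: int assumes "\<alpha> \<noteq> 0"
  shows "integral {0..2*pi} (\<lambda>s. cis (of_int \<alpha> * s)) = 0"
proof -
  have "((\<lambda>s. cis (of_int \<alpha> * s)) has_integral
     (cis (of_int \<alpha> * (2*pi)) / (\<i> * of_int \<alpha>) - cis (of_int \<alpha> * 0) / (\<i> * of_int \<alpha>))) {0..2*pi}"
  proof (rule fundamental_theorem_of_calculus)
    fix x :: real
    show "((\<lambda>s. cis (of_int \<alpha> * s) / (\<i> * of_int \<alpha>)) has_vector_derivative cis (of_int \<alpha> * x)) (at x within {0..2*pi})"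
      unfolding has_vector_derivative_def using assms
      by (auto intro!: derivative_eq_intros simp: scaleR_conv_of_real field_simps)
  qed simp
  moreover have "cis (of_int \<alpha> * (2*pi)) = 1"
    by (metis cis_2pi cis_power_int mult.commute power_int_1_left)
  ultimately show ?thesis by (simp add: integral_unique)
qed

lemma coeff_extract:
  fixes A D :: "nat \<Rightarrow> complex" and w :: complex and m :: nat
  assumes H: "\<And>e. w * e \<noteq> 1 \<Longrightarrow> (\<Sum>k<m. A k * e^k) = (\<Sum>j\<le>m. D j * e^j) / (1 - w * e)"
  shows "k < m \<Longrightarrow> A k = (\<Sum>l\<le>k. w^(k-l) * D l)"
proof -
  define q where "q = (\<Sum>k<m. monom (A k) k)"
  define p1 where "p1 = pCons 1 [:-w:] * q"
  define p2 where "p2 = (\<Sum>j\<le>m. monom (D j) j)"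
  have pq: "poly q e = (\<Sum>k<m. A k * e^k)" for e by (simp add: q_def poly_sum poly_monom)
  have pp2: "poly p2 e = (\<Sum>j\<le>m. D j * e^j)" for e by (simp add: p2_def poly_sum poly_monom)
  have z: "poly (p1 - p2) e = 0" if "w * e \<noteq> 1" for e
  proof -
    have ne: "1 - w * e \<noteq> 0" using that by auto
    have "(\<Sum>k<m. A k * e^k) * (1 - w * e) = (\<Sum>j\<le>m. D j * e^j)"
      using H[OF that] ne by (simp add: field_simps)
    then show ?thesis by (simp add: p1_def pq pp2 algebra_simps)
  qed
  have fin: "finite {e::complex. w * e = 1}"
  proof (cases "w = 0")
    case True then show ?thesis by simp
  next
    case False
    then have "{e::complex. w * e = 1} \<subseteq> {1 / w}" by (auto simp: field_simps)
    then show ?thesis by (rule finite_subset) simp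
  qed
  have "infinite {e::complex. w * e \<noteq> 1}"
  proof
    assume "finite {e::complex. w * e \<noteq> 1}"
    with fin have "finite ({e::complex. w * e \<noteq> 1} \<union> {e. w * e = 1})" by simp
    moreover have "{e::complex. w * e \<noteq> 1} \<union> {e. w * e = 1} = UNIV" by auto
    ultimately show False using infinite_UNIV_char_0[where 'a=complex] by simp
  qed
  moreover have "{e::complex. w * e \<noteq> 1} \<subseteq> {e. poly (p1 - p2) e = 0}" using z by auto
  ultimately have "infinite {e. poly (p1 - p2) e = 0}" using finite_subset by blast
  then have "p1 - p2 = 0" using poly_roots_finite by blast
  then have peq: "p1 = p2" by simp
  have cq: "coeff q j = (if j < m then A j else 0)" for j
    by (simp add: q_def coeff_sum coeff_monom)
  have cp2: "coeff p2 j = (if j \<le> m then D j else 0)" for j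
    by (simp add: p2_def coeff_sum coeff_monom)
  have cp1: "coeff p1 j = coeff q j + (case j of 0 \<Rightarrow> 0 | Suc j' \<Rightarrow> - w * coeff q j')" for j
    by (simp add: p1_def mult_pCons_left coeff_pCons split: nat.split)
  have base: "0 < m \<Longrightarrow> A 0 = D 0"
    using cp1[of 0] cq[of 0] cp2[of 0] peq by simp
  have step: "Suc j < m \<Longrightarrow> A (Suc j) = w * A j + D (Suc j)" for j
    using cp1[of "Suc j"] cq[of "Suc j"] cq[of j] cp2[of "Suc j"] peq by simp
  show "k < m \<Longrightarrow> A k = (\<Sum>l\<le>k. w^(k-l) * D l)"
  proof (induction k)
    case 0 then show ?case using base by simp
  next
    case (Suc k)
    then have "A (Suc k) = w * A k + D (Suc k)" using step by simp
    also have "\<dots> = w * (\<Sum>l\<le>k. w^(k-l) * D l) + D (Suc k)" using Suc by simp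
    also have "\<dots> = (\<Sum>l\<le>Suc k. w^(Suc k-l) * D l)"
      by (simp add: sum_distrib_left Suc_diff_le mult.assoc)
    finally show ?case .
  qed
qed

lemma cont_torus_P:
  fixes c :: "nat \<Rightarrow> nat \<Rightarrow> complex"
  assumes Pdef: "\<And>z w. P z w = (\<Sum>i\<le>n. \<Sum>j\<le>m. c i j * z^i * w^j)"
  shows "continuous_on S (\<lambda>x::real\<times>real. P (cis (fst x)) (cis (snd x)))"
proof -
  have Pe: "P = (\<lambda>z w. \<Sum>i\<le>n. \<Sum>j\<le>m. c i j * z^i * w^j)" using Pdef by (intro ext) simp
  show ?thesis unfolding Pe by (intro continuous_intros)
qed

lemma cont_F:
  fixes c :: "nat \<Rightarrow> nat \<Rightarrow> complex"
  assumes Pdef: "\<And>z w. P z w = (\<Sum>i\<le>n. \<Sum>j\<le>m. c i j * z^i * w^j)"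
    and nz: "\<And>z w. cmod z \<le> 1 \<Longrightarrow> cmod w \<le> 1 \<Longrightarrow> P z w \<noteq> 0"
  shows "continuous_on S (\<lambda>x::real\<times>real. cis (of_int \<alpha> * fst x) * cis (of_int \<beta> * snd x) / P (cis (fst x)) (cis (snd x)))"
  using nz by (intro continuous_intros cont_torus_P[OF Pdef]) auto

lemma P_swap:
  fixes c :: "nat \<Rightarrow> nat \<Rightarrow> complex"
  assumes Pdef: "\<And>z w. P z w = (\<Sum>i\<le>n. \<Sum>j\<le>m. c i j * z^i * w^j)"
  shows "P z w = (\<Sum>j\<le>m. (\<Sum>i\<le>n. c i j * z^i) * w^j)"
  unfolding Pdef sum_distrib_right by (rule sum.swap)

lemma P_z:
  fixes c :: "nat \<Rightarrow> nat \<Rightarrow> complex"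
  assumes Pdef: "\<And>z w. P z w = (\<Sum>i\<le>n. \<Sum>j\<le>m. c i j * z^i * w^j)"
  shows "P z w = (\<Sum>i\<le>n. (\<Sum>j\<le>m. c i j * w^j) * z^i)"
  unfolding Pdef sum_distrib_right by (intro sum.cong refl) (simp add: mult_ac)

lemma cis_nat_pow: "0 \<le> (\<beta>::int) \<Longrightarrow> cis (of_int \<beta> * t) = cis t ^ nat \<beta>"
proof -
  assume b: "0 \<le> \<beta>"
  then obtain k where k: "\<beta> = int k" by (metis nonneg_eq_int)
  have "cis (of_int \<beta> * t) = cis t powi \<beta>" by (simp add: cis_power_int)
  then show ?thesis by (simp add: k)
qed

lemma Phi_zero:
  fixes c :: "nat \<Rightarrow> nat \<Rightarrow> complex" and \<alpha> \<beta> :: int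
  assumes Pdef: "\<And>z w. P z w = (\<Sum>i\<le>n. \<Sum>j\<le>m. c i j * z^i * w^j)"
    and nz: "\<And>z w. cmod z \<le> 1 \<Longrightarrow> cmod w \<le> 1 \<Longrightarrow> P z w \<noteq> 0"
    and ab: "\<alpha> > 0 \<or> \<beta> > 0"
  shows "integral (cbox (0,0) (2*pi,2*pi)) (\<lambda>x. cis (of_int \<alpha> * fst x) * cis (of_int \<beta> * snd x) / P (cis (fst x)) (cis (snd x))) = 0"
proof -
  define F where "F x = cis (of_int \<alpha> * fst x) * cis (of_int \<beta> * snd x) / P (cis (fst x)) (cis (snd x))" for x :: "real \<times> real"
  have cF: "continuous_on S F" for S unfolding F_def by (rule cont_F[OF Pdef nz])
  show ?thesis
  proof (cases "\<beta> > 0")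
    case True
    have "integral (cbox (0,0) (2*pi,2*pi)) F = integral (cbox 0 (2*pi)) (\<lambda>s. integral (cbox 0 (2*pi)) (\<lambda>t. F (s,t)))"
      by (rule integral_prod_continuous[OF cF])
    also have "\<dots> = integral (cbox 0 (2*pi)) (\<lambda>s. 0)"
    proof (rule integral_cong)
      fix s :: real
      define bs where "bs j = (\<Sum>i\<le>n. c i j * cis s ^ i)" for j
      have Pj: "P (cis s) w = (\<Sum>j\<le>m. bs j * w^j)" for w unfolding bs_def by (rule P_swap[OF Pdef])
      have "integral {0..2*pi} (\<lambda>t. cis t ^ nat \<beta> / (\<Sum>j\<le>m. bs j * cis t ^ j)) = 0"
      proof (rule circle_poly_zero)
        show "\<And>z. cmod z \<le> 1 \<Longrightarrow> (\<Sum>j\<le>m. bs j * z ^ j) \<noteq> 0" using nz Pj by (metis norm_cis order_refl)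
        show "1 \<le> nat \<beta>" using True by simp
      qed
      moreover have Fst: "F (s,t) = cis (of_int \<alpha> * s) * (cis t ^ nat \<beta> / (\<Sum>j\<le>m. bs j * cis t ^ j))" for t
        unfolding F_def using True by (simp add: Pj cis_nat_pow)
      ultimately show "integral (cbox 0 (2*pi)) (\<lambda>t. F (s,t)) = 0"
        by (simp only: Fst cbox_interval integral_mult_right mult_zero_right)
    qed
    finally show ?thesis by (simp add: F_def[abs_def])
  next
    case False
    then have aa: "\<alpha> > 0" using ab by simp
    define G where "G x y = F (x,y)" for x y
    have "integral (cbox (0,0) (2*pi,2*pi)) F = integral (cbox (0,0) (2*pi,2*pi)) (\<lambda>(x,y). G x y)"
      by (simp add: G_def)
    also have "\<dots> = integral (cbox (0,0) (2*pi,2*pi)) (\<lambda>(x,y). G y x)"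
      by (rule integral_swap_2dim) (simp add: G_def cF)
    also have "\<dots> = integral (cbox 0 (2*pi)) (\<lambda>t. integral (cbox 0 (2*pi)) (\<lambda>s. G s t))"
    proof -
      have "continuous_on (cbox (0,0) (2*pi,2*pi)) (\<lambda>p. F (snd p, fst p))"
        by (rule continuous_on_compose2[OF cF]) (auto intro!: continuous_intros)
      then have "continuous_on (cbox (0,0) (2*pi,2*pi)) (\<lambda>(x,y). G y x)"
        by (simp add: G_def case_prod_beta')
      then show ?thesis by (subst integral_prod_continuous) simp_all
    qed
    also have "\<dots> = integral (cbox 0 (2*pi)) (\<lambda>t. 0)"
    proof (rule integral_cong)
      fix t :: real
      define bs where "bs i = (\<Sum>j\<le>m. c i j * cis t ^ j)" for i
      have Pi: "P z (cis t) = (\<Sum>i\<le>n. bs i * z^i)" for z unfolding bs_def by (rule P_z[OF Pdef])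
      have "integral {0..2*pi} (\<lambda>s. cis s ^ nat \<alpha> / (\<Sum>i\<le>n. bs i * cis s ^ i)) = 0"
      proof (rule circle_poly_zero)
        show "\<And>z. cmod z \<le> 1 \<Longrightarrow> (\<Sum>i\<le>n. bs i * z ^ i) \<noteq> 0" using nz Pi by (metis norm_cis order_refl)
        show "1 \<le> nat \<alpha>" using aa by simp
      qed
      moreover have Gst: "G s t = cis (of_int \<beta> * t) * (cis s ^ nat \<alpha> / (\<Sum>i\<le>n. bs i * cis s ^ i))" for s
        unfolding G_def F_def using aa by (simp add: Pi cis_nat_pow)
      ultimately show "integral (cbox 0 (2*pi)) (\<lambda>s. G s t) = 0"
        by (simp only: Gst cbox_interval integral_mult_right mult_zero_right)
    qed
    finally show ?thesis by (simp add: F_def[abs_def])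
  qed
qed

lemma cis2_zero:
  fixes \<alpha> \<beta> :: int
  assumes "\<alpha> \<noteq> 0 \<or> \<beta> \<noteq> 0"
  shows "integral (cbox (0,0) (2*pi,2*pi)) (\<lambda>x. cis (of_int \<alpha> * fst x) * cis (of_int \<beta> * snd x)) = 0"
proof -
  have "integral (cbox (0,0) (2*pi,2*pi)) (\<lambda>x. cis (of_int \<alpha> * fst x) * cis (of_int \<beta> * snd x))
      = integral (cbox 0 (2*pi)) (\<lambda>s. integral (cbox 0 (2*pi)) (\<lambda>t. cis (of_int \<alpha> * s) * cis (of_int \<beta> * t)))"
    by (subst integral_prod_continuous) (auto intro!: continuous_intros)
  also have "\<dots> = integral (cbox 0 (2*pi)) (\<lambda>s. cis (of_int \<alpha> * s) * integral {0..2*pi} (\<lambda>t. cis (of_int \<beta> * t)))"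
    by simp
  also have "\<dots> = 0"
  proof (cases "\<beta> = 0")
    case True
    then have "\<alpha> \<noteq> 0" using assms by simp
    with True show ?thesis using cis_int_integral[of \<alpha>] by simp
  next
    case False
    then show ?thesis using cis_int_integral[of \<beta>] by simp
  qed
  finally show ?thesis .
qed

lemma bpoly_box:
  fixes c :: "nat \<Rightarrow> nat \<Rightarrow> complex"
  assumes supp: "\<And>i j. c i j \<noteq> 0 \<Longrightarrow> i \<le> n \<and> j \<le> m"
  shows "bpoly_eval c z w = (\<Sum>i\<le>n. \<Sum>j\<le>m. c i j * z^i * w^j)"
proof -
  have "bpoly_eval c z w = (\<Sum>(i,j)\<in>{..n}\<times>{..m}. c i j * z ^ i * w ^ j)"
    unfolding bpoly_eval_def
    by (rule sum.mono_neutral_left) (auto dest: supp)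
  also have "\<dots> = (\<Sum>i\<le>n. \<Sum>j\<le>m. c i j * z^i * w^j)"
    by (simp add: sum.cartesian_product)
  finally show ?thesis .
qed

lemma reflect_box:
  fixes c :: "nat \<Rightarrow> nat \<Rightarrow> complex"
  shows "bpoly_eval (reflect n m c) z w = (\<Sum>i\<le>n. \<Sum>j\<le>m. cnj (c (n-i) (m-j)) * z^i * w^j)"
proof -
  have "bpoly_eval (reflect n m c) z w = (\<Sum>i\<le>n. \<Sum>j\<le>m. reflect n m c i j * z^i * w^j)"
    by (rule bpoly_box) (auto simp: reflect_def split: if_splits)
  also have "\<dots> = (\<Sum>i\<le>n. \<Sum>j\<le>m. cnj (c (n-i) (m-j)) * z^i * w^j)"
    by (intro sum.cong refl) (simp add: reflect_def)
  finally show ?thesis .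
qed

lemma cnjP:
  fixes c :: "nat \<Rightarrow> nat \<Rightarrow> complex"
  assumes Pdef: "\<And>z w. P z w = (\<Sum>i\<le>n. \<Sum>j\<le>m. c i j * z^i * w^j)"
  shows "cnj (P (1 / cnj z) (cnj e)) = (\<Sum>j\<le>m. (\<Sum>i\<le>n. cnj (c i j) * (1/z)^i) * e^j)"
  by (simp add: P_swap[OF Pdef])

lemma A_closed:
  fixes c :: "nat \<Rightarrow> nat \<Rightarrow> complex" and A :: "nat \<Rightarrow> complex"
  assumes Pdef: "\<And>z w. P z w = (\<Sum>i\<le>n. \<Sum>j\<le>m. c i j * z^i * w^j)"
    and Rdef: "\<And>z w. R z w = (\<Sum>i\<le>n. \<Sum>j\<le>m. r i j * z^i * w^j)"
    and H: "\<And>\<eta>. w * cnj \<eta> \<noteq> 1 \<Longrightarrow> (\<Sum>k<m. A k * cnj \<eta> ^ k) =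
           z ^ n * (P z w * cnj (P (1 / cnj z) \<eta>) - R z w * cnj (R (1 / cnj z) \<eta>)) / (1 - w * cnj \<eta>)"
    and k: "k < m"
  shows "A k = (\<Sum>l\<le>k. w^(k-l) * (z^n * (P z w * (\<Sum>i\<le>n. cnj (c i l) * (1/z)^i)
                      - R z w * (\<Sum>i\<le>n. cnj (r i l) * (1/z)^i))))"
proof (rule coeff_extract[OF _ k])
  fix e assume we: "w * e \<noteq> 1"
  have "(\<Sum>k<m. A k * e ^ k) = (\<Sum>k<m. A k * cnj (cnj e) ^ k)" by simp
  also have "\<dots> = z ^ n * (P z w * cnj (P (1 / cnj z) (cnj e)) - R z w * cnj (R (1 / cnj z) (cnj e))) / (1 - w * e)"
    using H[of "cnj e"] we by simp
  also have "\<dots> = (\<Sum>j\<le>m. (z^n * (P z w * (\<Sum>i\<le>n. cnj (c i j) * (1/z)^i)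
                      - R z w * (\<Sum>i\<le>n. cnj (r i j) * (1/z)^i))) * e^j) / (1 - w * e)"
  proof -
    define S1 where "S1 j = (\<Sum>i\<le>n. cnj (c i j) * (1/z)^i)" for j
    define S2 where "S2 j = (\<Sum>i\<le>n. cnj (r i j) * (1/z)^i)" for j
    have e1: "cnj (P (1 / cnj z) (cnj e)) = (\<Sum>j\<le>m. S1 j * e^j)" unfolding S1_def by (rule cnjP[OF Pdef])
    have e2: "cnj (R (1 / cnj z) (cnj e)) = (\<Sum>j\<le>m. S2 j * e^j)" unfolding S2_def by (rule cnjP[OF Rdef])
    have "(\<Sum>j\<le>m. (z^n * (P z w * S1 j - R z w * S2 j)) * e^j)
        = (\<Sum>j\<le>m. z^n * P z w * (S1 j * e^j) - z^n * R z w * (S2 j * e^j))"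
      by (intro sum.cong refl) (simp add: algebra_simps)
    also have "\<dots> = z^n * P z w * (\<Sum>j\<le>m. S1 j * e^j) - z^n * R z w * (\<Sum>j\<le>m. S2 j * e^j)"
      by (simp add: sum_subtractf sum_distrib_left)
    also have "\<dots> = z^n * (P z w * cnj (P (1 / cnj z) (cnj e)) - R z w * cnj (R (1 / cnj z) (cnj e)))"
      by (simp add: e1 e2 algebra_simps)
    finally show ?thesis unfolding S1_def S2_def by simp
  qed
  finally show "(\<Sum>k<m. A k * e ^ k) = (\<Sum>j\<le>m. (z^n * (P z w * (\<Sum>i\<le>n. cnj (c i j) * (1/z)^i)
                      - R z w * (\<Sum>i\<le>n. cnj (r i j) * (1/z)^i))) * e^j) / (1 - w * e)" .
qed

lemma cnj_unit: "cmod u = 1 \<Longrightarrow> cnj u = inverse u"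
proof -
  assume u: "cmod u = 1"
  have "u * cnj u = 1" using complex_norm_square[of u] u by simp
  then show ?thesis using inverse_unique[of u "cnj u"] by simp
qed

lemma R_torus:
  fixes c :: "nat \<Rightarrow> nat \<Rightarrow> complex"
  assumes Pdef: "\<And>z w. P z w = (\<Sum>i\<le>n. \<Sum>j\<le>m. c i j * z^i * w^j)"
    and u: "cmod u = 1" and v: "cmod v = 1"
  shows "(\<Sum>i\<le>n. \<Sum>j\<le>m. cnj (c (n-i) (m-j)) * u^i * v^j) = u^n * v^m * cnj (P u v)"
proof -
  have u0: "u \<noteq> 0" and v0: "v \<noteq> 0" using u v by auto
  have "(\<Sum>i\<le>n. \<Sum>j\<le>m. cnj (c (n-i) (m-j)) * u^i * v^j) = (\<Sum>i\<le>n. \<Sum>j\<le>m. cnj (c (n-i) (m-j)) * u^(n-(n-i)) * v^(m-(m-j)))"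
    by (intro sum.cong refl) simp
  also have "\<dots> = (\<Sum>i\<le>n. \<Sum>j\<le>m. cnj (c i j) * u^(n-i) * v^(m-j))"
    by (subst sum_atMost_rev) (subst (2) sum_atMost_rev, simp)
  also have "\<dots> = (\<Sum>i\<le>n. \<Sum>j\<le>m. u^n * v^m * (cnj (c i j) * inverse u ^ i * inverse v ^ j))"
    using u0 v0 by (intro sum.cong refl) (simp add: power_diff field_simps)
  also have "\<dots> = u^n * v^m * cnj (P u v)"
    by (simp add: Pdef sum_distrib_left cnj_unit[OF u] cnj_unit[OF v])
  finally show ?thesis .
qed

lemma cis_A: "cis (of_int (x - int p + int q) * s) = cis (of_int x * s) * cis s ^ q / cis s ^ p"
  by (simp add: Complex.DeMoivre cis_mult cis_divide algebra_simps)

lemma cis_B: "cis (of_int (int p - x + int q) * s) = cis s ^ p * cis s ^ q / cis (of_int x * s)"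
  by (simp add: Complex.DeMoivre cis_mult cis_divide algebra_simps)

lemma cis_C: "cis (of_int (int p + int q - int r - x) * s) = cis s ^ p * cis s ^ q / cis s ^ r / cis (of_int x * s)"
  by (simp add: Complex.DeMoivre cis_mult cis_divide algebra_simps)

lemma cnj_mono: "cnj (cis s powi a * cis t powi b) = inverse (cis (of_int a * s)) * inverse (cis (of_int b * t))"
  by (simp add: cis_power_int cis_cnj)

lemma torus_identity:
  fixes c :: "nat \<Rightarrow> nat \<Rightarrow> complex" and s t :: real and a b :: int
  assumes Pdef: "\<And>z w. P z w = (\<Sum>i\<le>n. \<Sum>j\<le>m. c i j * z^i * w^j)"
    and Pnz: "P (cis s) (cis t) \<noteq> 0" and k: "k < m"
    and Edef: "\<And>\<alpha> \<beta>. E \<alpha> \<beta> = cis (of_int \<alpha> * s) * cis (of_int \<beta> * t) / P (cis s) (cis t)"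
  shows "(\<Sum>l\<le>k. cis t^(k-l) * (cis s^n * (P (cis s) (cis t) * (\<Sum>i\<le>n. cnj (c i l) * (1/cis s)^i)
             - (\<Sum>i\<le>n. \<Sum>j\<le>m. cnj (c (n-i) (m-j)) * cis s^i * cis t^j) * (\<Sum>i\<le>n. cnj (reflect n m c i l) * (1/cis s)^i))))
         * cnj (cis s powi a * cis t powi b) / complex_of_real ((cmod (P (cis s) (cis t)))^2)
       = (\<Sum>l\<le>k. \<Sum>i\<le>n. cnj (c i l) * cnj (E (a - int n + int i) (b + int l - int k))
                          - c i (m - l) * E (int n - a + int i) (int m + int k - int l - b))"
proof -
  define u where "u = cis s"
  define v where "v = cis t"
  define Pz where "Pz = P u v"
  define cP where "cP = cnj Pz"
  define Au where "Au = cis (of_int a * s)"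
  define Bv where "Bv = cis (of_int b * t)"
  have u1: "cmod u = 1" and v1: "cmod v = 1" and Au1: "cmod Au = 1" and Bv1: "cmod Bv = 1"
    by (simp_all add: u_def v_def Au_def Bv_def)
  have u0: "u \<noteq> 0" and v0: "v \<noteq> 0" and Au0: "Au \<noteq> 0" and Bv0: "Bv \<noteq> 0"
    using u1 v1 Au1 Bv1 by auto
  have Pz0: "Pz \<noteq> 0" using Pnz by (simp add: Pz_def u_def v_def)
  have cP0: "cP \<noteq> 0" using Pz0 by (simp add: cP_def)
  have R: "(\<Sum>i\<le>n. \<Sum>j\<le>m. cnj (c (n-i) (m-j)) * u^i * v^j) = u^n * v^m * cP"
    unfolding cP_def Pz_def by (rule R_torus[OF Pdef u1 v1])
  have S2: "(\<Sum>i\<le>n. cnj (reflect n m c i l) * (1/u)^i) = (\<Sum>i\<le>n. c i (m-l) * (u^i / u^n))"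
    if l: "l \<le> m" for l
  proof -
    have "(\<Sum>i\<le>n. cnj (reflect n m c i l) * (1/u)^i) = (\<Sum>i\<le>n. c (n-i) (m-l) * (1/u)^i)"
      using l by (intro sum.cong refl) (simp add: reflect_def)
    also have "\<dots> = (\<Sum>i\<le>n. c (n-(n-i)) (m-l) * (1/u)^(n-i))"
      by (rule sum_atMost_rev)
    also have "\<dots> = (\<Sum>i\<le>n. c i (m-l) * (u^i / u^n))"
      using u0 by (intro sum.cong refl) (simp add: power_diff power_one_over)
    finally show ?thesis .
  qed
  have mono: "cnj (u powi a * v powi b) = inverse Au * inverse Bv"
    unfolding u_def v_def Au_def Bv_def by (rule cnj_mono)
  have nsq: "complex_of_real ((cmod Pz)^2) = Pz * cP"
    unfolding cP_def by (rule complex_norm_square)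
  define Q where "Q = inverse Au * inverse Bv / (Pz * cP)"
  define S1 where "S1 l = (\<Sum>i\<le>n. cnj (c i l) * (1/u)^i)" for l
  define S2' where "S2' l = (\<Sum>i\<le>n. c i (m-l) * (u^i / u^n))" for l
  define X1 where "X1 l i = v^(k-l) * u^n * Pz * Q * (1/u)^i" for l i
  define X2 where "X2 l i = v^(k-l) * u^n * (u^n * v^m * cP) * Q * (u^i / u^n)" for l i
  have E1: "cnj (E (a - int n + int i) (b + int l - int k)) = X1 l i" if "l \<le> k" for l i
  proof -
    have bb: "b + int l - int k = b - int k + int l" by simp
    have "E (a - int n + int i) (b + int l - int k) = Au * u^i / u^n * (Bv * v^l / v^k) / Pz"
      unfolding Edef bb cis_A by (simp add: u_def v_def Au_def Bv_def Pz_def)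
    then have "cnj (E (a - int n + int i) (b + int l - int k)) = inverse Au * inverse u^i / inverse u^n * (inverse Bv * inverse v^l / inverse v^k) / cP"
      by (simp add: cnj_unit[OF u1] cnj_unit[OF v1] cnj_unit[OF Au1] cnj_unit[OF Bv1] cP_def)
    also have "\<dots> = X1 l i"
      unfolding X1_def Q_def using that u0 v0 Au0 Bv0 Pz0 cP0
      by (simp add: power_diff field_simps)
    finally show ?thesis .
  qed
  have E2: "E (int n - a + int i) (int m + int k - int l - b) = X2 l i" if "l \<le> k" for l i
  proof -
    have "E (int n - a + int i) (int m + int k - int l - b) = u^n * u^i / Au * (v^m * v^k / v^l / Bv) / Pz"
      unfolding Edef cis_B cis_C by (simp add: u_def v_def Au_def Bv_def Pz_def)
    also have "\<dots> = X2 l i"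
      unfolding X2_def Q_def using that u0 v0 Au0 Bv0 Pz0 cP0
      by (simp add: power_diff field_simps)
    finally show ?thesis .
  qed
  have per_l: "v^(k-l) * (u^n * (Pz * S1 l - (u^n * v^m * cP) * S2' l)) * Q
      = (\<Sum>i\<le>n. cnj (c i l) * X1 l i - c i (m - l) * X2 l i)" for l
  proof -
    have "v^(k-l) * (u^n * (Pz * S1 l - (u^n * v^m * cP) * S2' l)) * Q
        = (v^(k-l) * u^n * Pz * Q) * S1 l - (v^(k-l) * u^n * (u^n * v^m * cP) * Q) * S2' l"
      by (simp add: algebra_simps)
    also have "\<dots> = (\<Sum>i\<le>n. (v^(k-l) * u^n * Pz * Q) * (cnj (c i l) * (1/u)^i))
                    - (\<Sum>i\<le>n. (v^(k-l) * u^n * (u^n * v^m * cP) * Q) * (c i (m-l) * (u^i / u^n)))"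
      by (simp only: S1_def S2'_def sum_distrib_left)
    also have "\<dots> = (\<Sum>i\<le>n. (v^(k-l) * u^n * Pz * Q) * (cnj (c i l) * (1/u)^i)
                    - (v^(k-l) * u^n * (u^n * v^m * cP) * Q) * (c i (m-l) * (u^i / u^n)))"
      by (simp only: sum_subtractf)
    also have "\<dots> = (\<Sum>i\<le>n. cnj (c i l) * X1 l i - c i (m - l) * X2 l i)"
      by (intro sum.cong refl) (simp only: X1_def X2_def mult_ac)
    finally show ?thesis .
  qed
  have "(\<Sum>l\<le>k. cis t^(k-l) * (cis s^n * (P (cis s) (cis t) * (\<Sum>i\<le>n. cnj (c i l) * (1/cis s)^i)
             - (\<Sum>i\<le>n. \<Sum>j\<le>m. cnj (c (n-i) (m-j)) * cis s^i * cis t^j) * (\<Sum>i\<le>n. cnj (reflect n m c i l) * (1/cis s)^i))))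
         * cnj (cis s powi a * cis t powi b) / complex_of_real ((cmod (P (cis s) (cis t)))^2)
      = (\<Sum>l\<le>k. v^(k-l) * (u^n * (Pz * S1 l - (u^n * v^m * cP) * S2' l))) * Q"
  proof -
    have "(\<Sum>l\<le>k. v^(k-l) * (u^n * (Pz * S1 l - (\<Sum>i\<le>n. \<Sum>j\<le>m. cnj (c (n-i) (m-j)) * u^i * v^j) * (\<Sum>i\<le>n. cnj (reflect n m c i l) * (1/u)^i))))
        = (\<Sum>l\<le>k. v^(k-l) * (u^n * (Pz * S1 l - (u^n * v^m * cP) * S2' l)))"
      using k by (intro sum.cong refl) (simp add: R S2 S2'_def)
    then show ?thesis
      unfolding u_def[symmetric] v_def[symmetric] Pz_def[symmetric] mono nsq Q_def S1_def
      by (simp add: divide_inverse mult.assoc)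
  qed
  also have "\<dots> = (\<Sum>l\<le>k. v^(k-l) * (u^n * (Pz * S1 l - (u^n * v^m * cP) * S2' l)) * Q)"
    by (rule sum_distrib_right)
  also have "\<dots> = (\<Sum>l\<le>k. \<Sum>i\<le>n. cnj (c i l) * X1 l i - c i (m - l) * X2 l i)"
    using per_l by simp
  also have "\<dots> = (\<Sum>l\<le>k. \<Sum>i\<le>n. cnj (c i l) * cnj (E (a - int n + int i) (b + int l - int k))
                          - c i (m - l) * E (int n - a + int i) (int m + int k - int l - b))"
    using E1 E2 by (intro sum.cong refl) simp
  finally show ?thesis .
qed

definition Ff :: "(complex \<Rightarrow> complex \<Rightarrow> complex) \<Rightarrow> int \<Rightarrow> int \<Rightarrow> real \<times> real \<Rightarrow> complex" where
  "Ff P \<alpha> \<beta> x = cis (of_int \<alpha> * fst x) * cis (of_int \<beta> * snd x) / P (cis (fst x)) (cis (snd x))"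

definition Phi :: "(complex \<Rightarrow> complex \<Rightarrow> complex) \<Rightarrow> int \<Rightarrow> int \<Rightarrow> complex" where
  "Phi P \<alpha> \<beta> = integral (cbox (0,0) (2*pi,2*pi)) (Ff P \<alpha> \<beta>)"

lemma has_integral_cnj':
  "(f has_integral I) A \<Longrightarrow> ((\<lambda>x. cnj (f x)) has_integral (cnj I)) A"
  using has_integral_cnj[of f I A] by (simp add: comp_def)

lemma LINT_integral:
  fixes F :: "real \<times> real \<Rightarrow> complex"
  assumes "continuous_on ({0..2*pi}\<times>{0..2*pi}) F"
  shows "(LINT x:{0..2*pi}\<times>{0..2*pi}|lborel. F x) = integral (cbox (0,0) (2*pi,2*pi)) F"
proof -
  have c: "compact ({0..2*pi}\<times>{0..2*pi::real})" by (intro compact_Times compact_Icc)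
  have "set_integrable lborel ({0..2*pi}\<times>{0..2*pi}) F"
    unfolding set_integrable_def by (rule borel_integrable_compact[OF c assms])
  then have "(LINT x:{0..2*pi}\<times>{0..2*pi}|lborel. F x) = integral ({0..2*pi}\<times>{0..2*pi}) F"
    by (rule set_borel_integral_eq_integral(2))
  moreover have e: "cbox (0,0) (2*pi,2*pi::real) = {0..2*pi}\<times>{0..2*pi}" by (simp add: cbox_Pair_eq)
  ultimately show ?thesis by (simp only: e)
qed

definition GG :: "(nat \<Rightarrow> nat \<Rightarrow> complex) \<Rightarrow> nat \<Rightarrow> nat \<Rightarrow> (complex \<Rightarrow> complex \<Rightarrow> complex) \<Rightarrow> nat \<Rightarrow> int \<Rightarrow> int \<Rightarrow> real \<times> real \<Rightarrow> complex" where
  "GG c n m P k a b x = (\<Sum>l\<le>k. \<Sum>i\<le>n. cnj (c i l) * cnj (Ff P (a - int n + int i) (b + int l - int k) x)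
                          - c i (m - l) * Ff P (int n - a + int i) (int m + int k - int l - b) x)"

context
  fixes c :: "nat \<Rightarrow> nat \<Rightarrow> complex" and n m :: nat and P :: "complex \<Rightarrow> complex \<Rightarrow> complex"
  assumes Pdef: "\<And>z w. P z w = (\<Sum>i\<le>n. \<Sum>j\<le>m. c i j * z^i * w^j)"
    and nz: "\<And>z w. cmod z \<le> 1 \<Longrightarrow> cmod w \<le> 1 \<Longrightarrow> P z w \<noteq> 0"
begin

lemma cont_Ff: "continuous_on S (Ff P \<alpha> \<beta>)"
  unfolding Ff_def[abs_def] by (rule cont_F[OF Pdef nz])

lemma has_int_Ff: "(Ff P \<alpha> \<beta> has_integral Phi P \<alpha> \<beta>) (cbox (0,0) (2*pi,2*pi))"
  unfolding Phi_def by (rule integrable_integral) (rule integrable_continuous[OF cont_Ff])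

lemma Phi_zero': "\<alpha> > 0 \<or> \<beta> > 0 \<Longrightarrow> Phi P \<alpha> \<beta> = 0"
  unfolding Phi_def Ff_def[abs_def] by (rule Phi_zero[OF Pdef nz])

lemma M2_sum:
  assumes ab: "\<alpha> \<noteq> 0 \<or> \<beta> \<noteq> 0"
  shows "(\<Sum>l\<le>m. \<Sum>i\<le>n. c i l * Phi P (\<alpha> + int i) (\<beta> + int l)) = 0"
proof -
  have h: "((\<lambda>x. \<Sum>l\<le>m. \<Sum>i\<le>n. c i l * Ff P (\<alpha> + int i) (\<beta> + int l) x) has_integral
        (\<Sum>l\<le>m. \<Sum>i\<le>n. c i l * Phi P (\<alpha> + int i) (\<beta> + int l))) (cbox (0,0) (2*pi,2*pi))"
    by (intro has_integral_sum finite_atMost has_integral_mult_right has_int_Ff)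
  have eq: "(\<Sum>l\<le>m. \<Sum>i\<le>n. c i l * Ff P (\<alpha> + int i) (\<beta> + int l) x) = cis (of_int \<alpha> * fst x) * cis (of_int \<beta> * snd x)" for x
  proof -
    define u where "u = cis (fst x)"
    define v where "v = cis (snd x)"
    have P0: "P u v \<noteq> 0" using nz by (simp add: u_def v_def)
    have ci: "cis (of_int (\<gamma> + int i) * y) = cis (of_int \<gamma> * y) * cis y ^ i" for \<gamma> i y
      by (simp add: Complex.DeMoivre cis_mult algebra_simps)
    have "(\<Sum>l\<le>m. \<Sum>i\<le>n. c i l * Ff P (\<alpha> + int i) (\<beta> + int l) x)
        = (\<Sum>l\<le>m. \<Sum>i\<le>n. cis (of_int \<alpha> * fst x) * cis (of_int \<beta> * snd x) / P u v * (c i l * u^i * v^l))"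
      by (intro sum.cong refl) (unfold Ff_def ci, simp add: u_def v_def divide_inverse mult_ac)
    also have "\<dots> = cis (of_int \<alpha> * fst x) * cis (of_int \<beta> * snd x) / P u v * (\<Sum>l\<le>m. \<Sum>i\<le>n. c i l * u^i * v^l)"
      by (simp add: sum_distrib_left)
    also have "(\<Sum>l\<le>m. \<Sum>i\<le>n. c i l * u^i * v^l) = P u v"
      unfolding Pdef by (rule sum.swap)
    finally show ?thesis using P0 by simp
  qed
  have "((\<lambda>x. cis (of_int \<alpha> * fst x) * cis (of_int \<beta> * snd x)) has_integral
        (\<Sum>l\<le>m. \<Sum>i\<le>n. c i l * Phi P (\<alpha> + int i) (\<beta> + int l))) (cbox (0,0) (2*pi,2*pi))"
    using h by (simp only: eq)
  moreover have "((\<lambda>x. cis (of_int \<alpha> * fst x) * cis (of_int \<beta> * snd x)) has_integral 0) (cbox (0,0) (2*pi,2*pi))"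
  proof -
    have "(\<lambda>x::real\<times>real. cis (of_int \<alpha> * fst x) * cis (of_int \<beta> * snd x)) integrable_on cbox (0,0) (2*pi,2*pi)"
      by (intro integrable_continuous continuous_intros)
    then show ?thesis using cis2_zero[OF ab] by (metis integrable_integral)
  qed
  ultimately show ?thesis by (rule has_integral_unique)
qed

lemma cont_GG: "continuous_on S (GG c n m P k a b)"
  unfolding GG_def[abs_def]
  by (intro continuous_intros cont_Ff)

lemma GG_vanish:
  assumes k: "k < m"
    and c2: "a < int n \<or> b < int m"
    and c1: "a > int n \<or> (b \<ge> 0 \<and> (a \<noteq> int n \<or> b \<noteq> int k))"
  shows "integral (cbox (0,0) (2*pi,2*pi)) (GG c n m P k a b) = 0"
proof -
  have "(GG c n m P k a b has_integral (\<Sum>l\<le>k. \<Sum>i\<le>n. cnj (c i l) * cnj (Phi P (a - int n + int i) (b + int l - int k))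
                          - c i (m - l) * Phi P (int n - a + int i) (int m + int k - int l - b))) (cbox (0,0) (2*pi,2*pi))"
    unfolding GG_def[abs_def]
    by (intro has_integral_sum finite_atMost has_integral_diff has_integral_mult_right has_integral_cnj' has_int_Ff)
  then have I: "integral (cbox (0,0) (2*pi,2*pi)) (GG c n m P k a b) =
      (\<Sum>l\<le>k. \<Sum>i\<le>n. cnj (c i l) * cnj (Phi P (a - int n + int i) (b + int l - int k))
                          - c i (m - l) * Phi P (int n - a + int i) (int m + int k - int l - b))"
    by (rule integral_unique)
  also have "\<dots> = cnj (\<Sum>l\<le>k. \<Sum>i\<le>n. c i l * Phi P (a - int n + int i) (b + int l - int k))
       - (\<Sum>l\<le>k. \<Sum>i\<le>n. c i (m - l) * Phi P (int n - a + int i) (int m + int k - int l - b))"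
    by (simp add: sum_subtractf)
  also have "(\<Sum>l\<le>k. \<Sum>i\<le>n. c i (m - l) * Phi P (int n - a + int i) (int m + int k - int l - b)) = 0"
  proof (intro sum.neutral ballI)
    fix l i assume l: "l \<in> {..k}" and i: "i \<in> {..n}"
    have "int n - a + int i > 0 \<or> int m + int k - int l - b > 0" using c2 l by auto
    then show "c i (m - l) * Phi P (int n - a + int i) (int m + int k - int l - b) = 0"
      by (simp add: Phi_zero')
  qed
  also have "(\<Sum>l\<le>k. \<Sum>i\<le>n. c i l * Phi P (a - int n + int i) (b + int l - int k)) = 0"
  proof (cases "a > int n")
    case True
    show ?thesis
    proof (intro sum.neutral ballI)
      fix l i assume "l \<in> {..k}" "i \<in> {..n}"
      then show "c i l * Phi P (a - int n + int i) (b + int l - int k) = 0"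
        using True by (simp add: Phi_zero')
    qed
  next
    case False
    then have b0: "b \<ge> 0" and ab: "a - int n \<noteq> 0 \<or> b - int k \<noteq> 0" using c1 by auto
    have "(\<Sum>l\<le>k. \<Sum>i\<le>n. c i l * Phi P (a - int n + int i) (b + int l - int k))
        = (\<Sum>l\<le>k. \<Sum>i\<le>n. c i l * Phi P (a - int n + int i) (b - int k + int l))"
      by (intro sum.cong refl) (simp add: algebra_simps)
    also have "\<dots> = (\<Sum>l\<le>m. \<Sum>i\<le>n. c i l * Phi P (a - int n + int i) (b - int k + int l))"
    proof (rule sum.mono_neutral_left)
      show "{..k} \<subseteq> {..m}" using k by auto
      show "\<forall>l\<in>{..m} - {..k}. (\<Sum>i\<le>n. c i l * Phi P (a - int n + int i) (b - int k + int l)) = 0"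
      proof
        fix l assume "l \<in> {..m} - {..k}"
        then have "b - int k + int l > 0" using b0 by auto
        then show "(\<Sum>i\<le>n. c i l * Phi P (a - int n + int i) (b - int k + int l)) = 0"
          by (simp add: Phi_zero')
      qed
    qed simp
    also have "\<dots> = 0" by (rule M2_sum[OF ab])
    finally show ?thesis .
  qed
  finally show ?thesis by simp
qed

end

lemma sum_mult_div: "(\<Sum>k\<in>K. f k * e k) * M / (N::complex) = (\<Sum>k\<in>K. e k * (f k * M / N))"
proof -
  have "(\<Sum>k\<in>K. f k * e k) * M / N = (\<Sum>k\<in>K. f k * e k * M / N)"
    by (simp add: sum_distrib_right sum_divide_distrib)
  also have "\<dots> = (\<Sum>k\<in>K. e k * (f k * M / N))"
    by (intro sum.cong refl) (simp add: divide_inverse mult_ac)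
  finally show ?thesis .
qed

theorem mainTheorem3:
  fixes n m :: nat
    and c :: "nat \<Rightarrow> nat \<Rightarrow> complex"
    and a :: "nat \<Rightarrow> nat \<Rightarrow> nat \<Rightarrow> complex"
  assumes "n \<ge> 1" and "m \<ge> 1"
    and "has_bidegree c n m"
    and "stable c"
    and "\<forall>k. finite {(i,j). a k i j \<noteq> 0}"
    and "\<forall>z w \<eta>. z \<noteq> 0 \<longrightarrow> w * cnj \<eta> \<noteq> 1 \<longrightarrow>
           (\<Sum>k<m. bpoly_eval (a k) z w * cnj \<eta> ^ k) =
           z ^ n * (bpoly_eval c z w * cnj (bpoly_eval c (1 / cnj z) \<eta>)
                    - bpoly_eval (reflect n m c) z w * cnj (bpoly_eval (reflect n m c) (1 / cnj z) \<eta>))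
           / (1 - w * cnj \<eta>)"
  shows "(\<forall>k<m. \<forall>i j :: int.
            ((i > int n \<and> j < 0) \<or> (0 \<le> j \<and> j < int m \<and> j \<noteq> int k)
             \<or> (i < int n \<and> j \<ge> int m) \<or> (j = int k \<and> i \<noteq> int n))
            \<longrightarrow> torus_inner c (bpoly_eval (a k)) (monomial i j) = 0)
       \<and> (\<forall>\<eta>::complex. \<forall>i j :: int.
            ((i > int n \<and> j < 0) \<or> (i \<noteq> int n \<and> 0 \<le> j \<and> j < int m)
             \<or> (i < int n \<and> j \<ge> int m))
            \<longrightarrow> torus_inner c (\<lambda>z w. \<Sum>k<m. bpoly_eval (a k) z w * cnj \<eta> ^ k) (monomial i j) = 0)"
proof -
  have supp: "\<And>i j. c i j \<noteq> 0 \<Longrightarrow> i \<le> n \<and> j \<le> m"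
    using assms(3) unfolding has_bidegree_def by blast
  define P where "P = bpoly_eval c"
  have Pdef: "\<And>z w. P z w = (\<Sum>i\<le>n. \<Sum>j\<le>m. c i j * z^i * w^j)"
    unfolding P_def by (rule bpoly_box[OF supp])
  have nz: "\<And>z w. cmod z \<le> 1 \<Longrightarrow> cmod w \<le> 1 \<Longrightarrow> P z w \<noteq> 0"
    using assms(4) unfolding stable_def P_def by blast
  define R where "R = bpoly_eval (reflect n m c)"
  have Rdef: "\<And>z w. R z w = (\<Sum>i\<le>n. \<Sum>j\<le>m. reflect n m c i j * z^i * w^j)"
    unfolding R_def by (rule bpoly_box) (auto simp: reflect_def split: if_splits)
  have Rbox: "\<And>z w. R z w = (\<Sum>i\<le>n. \<Sum>j\<le>m. cnj (c (n-i) (m-j)) * z^i * w^j)"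
    unfolding R_def by (rule reflect_box)
  have Aform: "bpoly_eval (a k) z w = (\<Sum>l\<le>k. w^(k-l) * (z^n * (P z w * (\<Sum>i\<le>n. cnj (c i l) * (1/z)^i)
                      - R z w * (\<Sum>i\<le>n. cnj (reflect n m c i l) * (1/z)^i))))"
    if km: "k < m" and z0: "z \<noteq> 0" for k z w
  proof (rule A_closed[OF Pdef Rdef _ km, where A="\<lambda>k. bpoly_eval (a k) z w"])
    fix \<eta> assume "w * cnj \<eta> \<noteq> 1"
    then show "(\<Sum>k<m. bpoly_eval (a k) z w * cnj \<eta> ^ k) =
           z ^ n * (P z w * cnj (P (1 / cnj z) \<eta>) - R z w * cnj (R (1 / cnj z) \<eta>)) / (1 - w * cnj \<eta>)"
      using assms(6) z0 unfolding P_def R_def by blast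
  qed
  have integrand: "(\<lambda>x. bpoly_eval (a k) (cis (fst x)) (cis (snd x)) * cnj (monomial a' b' (cis (fst x)) (cis (snd x)))
          / complex_of_real ((cmod (bpoly_eval c (cis (fst x)) (cis (snd x)))) ^ 2)) = GG c n m P k a' b'"
    if km: "k < m" for k a' b'
  proof (rule ext)
    fix x :: "real \<times> real"
    obtain s t where x: "x = (s,t)" by (cases x)
    have cz: "cis s \<noteq> 0" by simp
    have Pnz: "P (cis s) (cis t) \<noteq> 0" using nz by simp
    have E: "\<And>\<alpha> \<beta>. Ff P \<alpha> \<beta> (s,t) = cis (of_int \<alpha> * s) * cis (of_int \<beta> * t) / P (cis s) (cis t)"
      by (simp add: Ff_def)
    show "bpoly_eval (a k) (cis (fst x)) (cis (snd x)) * cnj (monomial a' b' (cis (fst x)) (cis (snd x)))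
          / complex_of_real ((cmod (bpoly_eval c (cis (fst x)) (cis (snd x)))) ^ 2) = GG c n m P k a' b' x"
      unfolding x GG_def fst_conv snd_conv monomial_def P_def[symmetric] Aform[OF km cz] Rbox
      by (rule torus_identity[OF Pdef Pnz km E])
  qed
  have GGint: "(GG c n m P k a' b' has_integral 0) (cbox (0,0) (2*pi,2*pi))"
    if km: "k < m" and c2: "a' < int n \<or> b' < int m"
      and c1: "a' > int n \<or> (b' \<ge> 0 \<and> (a' \<noteq> int n \<or> b' \<noteq> int k))" for k a' b'
  proof -
    have "GG c n m P k a' b' integrable_on cbox (0,0) (2*pi,2*pi)"
      by (rule integrable_continuous[OF cont_GG[OF Pdef nz]])
    then show ?thesis using GG_vanish[OF Pdef nz km c2 c1] by (metis integrable_integral)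
  qed
  have part1: "torus_inner c (bpoly_eval (a k)) (monomial a' b') = 0"
    if km: "k < m" and c2: "a' < int n \<or> b' < int m"
      and c1: "a' > int n \<or> (b' \<ge> 0 \<and> (a' \<noteq> int n \<or> b' \<noteq> int k))" for k a' b'
  proof -
    have "torus_inner c (bpoly_eval (a k)) (monomial a' b')
        = integral (cbox (0,0) (2*pi,2*pi)) (GG c n m P k a' b') / complex_of_real (4 * pi ^ 2)"
      unfolding torus_inner_def integrand[OF km] by (simp only: LINT_integral[OF cont_GG[OF Pdef nz]])
    also have "integral (cbox (0,0) (2*pi,2*pi)) (GG c n m P k a' b') = 0"
      using GGint[OF km c2 c1] by (rule integral_unique)
    finally show ?thesis by simp
  qed
  have part2: "torus_inner c (\<lambda>z w. \<Sum>k<m. bpoly_eval (a k) z w * cnj \<eta> ^ k) (monomial a' b') = 0"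
    if c2: "a' < int n \<or> b' < int m"
      and c1: "\<And>k. k < m \<Longrightarrow> a' > int n \<or> (b' \<ge> 0 \<and> (a' \<noteq> int n \<or> b' \<noteq> int k))" for \<eta> a' b'
  proof -
    have eqf: "(\<lambda>x. (\<Sum>k<m. bpoly_eval (a k) (cis (fst x)) (cis (snd x)) * cnj \<eta> ^ k) * cnj (monomial a' b' (cis (fst x)) (cis (snd x)))
          / complex_of_real ((cmod (bpoly_eval c (cis (fst x)) (cis (snd x)))) ^ 2))
        = (\<lambda>x. \<Sum>k<m. cnj \<eta> ^ k * GG c n m P k a' b' x)"
    proof (rule ext)
      fix x :: "real \<times> real"
      have "(\<Sum>k<m. bpoly_eval (a k) (cis (fst x)) (cis (snd x)) * cnj \<eta> ^ k) * cnj (monomial a' b' (cis (fst x)) (cis (snd x)))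
          / complex_of_real ((cmod (bpoly_eval c (cis (fst x)) (cis (snd x)))) ^ 2)
          = (\<Sum>k<m. cnj \<eta> ^ k * (bpoly_eval (a k) (cis (fst x)) (cis (snd x)) * cnj (monomial a' b' (cis (fst x)) (cis (snd x)))
          / complex_of_real ((cmod (bpoly_eval c (cis (fst x)) (cis (snd x)))) ^ 2)))"
        by (rule sum_mult_div)
      also have "\<dots> = (\<Sum>k<m. cnj \<eta> ^ k * GG c n m P k a' b' x)"
      proof (intro sum.cong refl)
        fix k assume "k \<in> {..<m}"
        then have km: "k < m" by simp
        show "cnj \<eta> ^ k * (bpoly_eval (a k) (cis (fst x)) (cis (snd x)) * cnj (monomial a' b' (cis (fst x)) (cis (snd x)))
          / complex_of_real ((cmod (bpoly_eval c (cis (fst x)) (cis (snd x)))) ^ 2)) = cnj \<eta> ^ k * GG c n m P k a' b' x"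
          using fun_cong[OF integrand[OF km, of a' b'], of x] by simp
      qed
      finally show "(\<Sum>k<m. bpoly_eval (a k) (cis (fst x)) (cis (snd x)) * cnj \<eta> ^ k) * cnj (monomial a' b' (cis (fst x)) (cis (snd x)))
          / complex_of_real ((cmod (bpoly_eval c (cis (fst x)) (cis (snd x)))) ^ 2) = (\<Sum>k<m. cnj \<eta> ^ k * GG c n m P k a' b' x)" .
    qed
    have cont: "continuous_on ({0..2*pi}\<times>{0..2*pi}) (\<lambda>x. \<Sum>k<m. cnj \<eta> ^ k * GG c n m P k a' b' x)"
      by (intro continuous_intros cont_GG[OF Pdef nz])
    have hi: "((\<lambda>x. \<Sum>k<m. cnj \<eta> ^ k * GG c n m P k a' b' x) has_integral (\<Sum>k<m. cnj \<eta> ^ k * 0)) (cbox (0,0) (2*pi,2*pi))"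
    proof (intro has_integral_sum finite_lessThan has_integral_mult_right)
      fix k assume "k \<in> {..<m}"
      then have km: "k < m" by simp
      show "(GG c n m P k a' b' has_integral 0) (cbox (0,0) (2*pi,2*pi))"
        by (rule GGint[OF km c2 c1[OF km]])
    qed
    have "torus_inner c (\<lambda>z w. \<Sum>k<m. bpoly_eval (a k) z w * cnj \<eta> ^ k) (monomial a' b')
        = integral (cbox (0,0) (2*pi,2*pi)) (\<lambda>x. \<Sum>k<m. cnj \<eta> ^ k * GG c n m P k a' b' x) / complex_of_real (4 * pi ^ 2)"
      unfolding torus_inner_def eqf by (simp only: LINT_integral[OF cont])
    also have "integral (cbox (0,0) (2*pi,2*pi)) (\<lambda>x. \<Sum>k<m. cnj \<eta> ^ k * GG c n m P k a' b' x) = 0"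
      using integral_unique[OF hi] by simp
    finally show ?thesis by simp
  qed
  show ?thesis
  proof (intro conjI allI impI)
    fix k :: nat and i j :: int
    assume km: "k < m"
      and h: "(i > int n \<and> j < 0) \<or> (0 \<le> j \<and> j < int m \<and> j \<noteq> int k)
             \<or> (i < int n \<and> j \<ge> int m) \<or> (j = int k \<and> i \<noteq> int n)"
    show "torus_inner c (bpoly_eval (a k)) (monomial i j) = 0"
    proof (rule part1[OF km])
      show "i < int n \<or> j < int m" using h km by auto
      show "i > int n \<or> (j \<ge> 0 \<and> (i \<noteq> int n \<or> j \<noteq> int k))" using h km by auto
    qed
  next
    fix \<eta> :: complex and i j :: int
    assume h: "(i > int n \<and> j < 0) \<or> (i \<noteq> int n \<and> 0 \<le> j \<and> j < int m)
             \<or> (i < int n \<and> j \<ge> int m)"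
    show "torus_inner c (\<lambda>z w. \<Sum>k<m. bpoly_eval (a k) z w * cnj \<eta> ^ k) (monomial i j) = 0"
    proof (rule part2)
      show "i < int n \<or> j < int m" using h by auto
      show "\<And>k. k < m \<Longrightarrow> i > int n \<or> (j \<ge> 0 \<and> (i \<noteq> int n \<or> j \<noteq> int k))" using h by auto
    qed
  qed
qed

end
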